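(* Let $\ell$ and $s$ be positive integers. If a partial $(n,k,t)_\lambda$-system has an $\ell$-presequencing with $s$ classes, then it has a nondeficient $\ell$-presequencing with $s$ classes, provided that \[ n > \lambda\left(2\binom{2\ell-3}{t}-\binom{\ell-2}{t}\right)\binom{k-1}{t}^{-1}+(2s-1)(\ell-1)-1. \]
   Context: For positive integers $n,k,t,\lambda$ with $n \geq k > t \geq 2$, a partial $(n,k,t)_\lambda$-system is a pair $(X,\mathcal{B})$ where $X$ is an $n$-set of vertices and $\mathcal{B}$ is a collection of $k$-subsets of $X$ (blocks) such that each $t$-subset of $X$ is contained in at most $\lambda$ blocks. An independent set is a subset of $X$ containing no block. An $\ell$-buffered set is a triple $(S,S^{L},S^{R})$ with $S^{L},S^{R}\subseteq S$ (buffers) such that: (B1) if $|S|\le \ell-2$ then $S^{L}=S^{R}=S$; (B2) if $\ell-1\le |S|\le 2\ell-2$ then $|S^{L}|=|S^{R}|=\ell-1$ and $S^{L}\cup S^{R}=S$; (B3) if $|S|\ge 2\ell-1$ then $|S^{L}|=|S^{R}|=\ell-1$ and $S^{L}\cap S^{R}=\emptyset$. It is deficient if $|S|\le \ell-2$ and nondeficient otherwise. An $\ell$-presequencing of $(X,\mathcal{B})$ is a tuple $(X_0,\ldots,X_{s-1})$ of $\ell$-buffered sets (classes) whose underlying sets partition $X$, such that (P1) each $X_i$ is independent, and (P2) for each $i\in\mathbb{Z}_s$, $X_i^{R}\cup X_{i+1}^{L}$ is independent (indices mod $s$). It is nondeficient if every class is nondeficient. Binomial coefficients $\binom{a}{t}$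 with $0\le a<t$ equal $0$. *)

theory Defs
  imports Complex_Main "HOL-Library.Multiset"
begin

definition partial_system ::
  "nat \<Rightarrow> nat \<Rightarrow> nat \<Rightarrow> nat \<Rightarrow> 'a set \<Rightarrow> 'a set multiset \<Rightarrow> bool" where
  "partial_system n k t lam X B \<longleftrightarrow>
     finite X \<and> card X = n \<and>
     (\<forall>b\<in>#B. b \<subseteq> X \<and> card b = k) \<and>
     (\<forall>T. T \<subseteq> X \<and> card T = t \<longrightarrow> size (filter_mset (\<lambda>b. T \<subseteq> b) B) \<le> lam)"

definition independent :: "'a set \<Rightarrow> 'a set multiset \<Rightarrow> 'a set \<Rightarrow> bool" where
  "independent X B I \<longleftrightarrow> I \<subseteq> X \<and> (\<forall>b\<in>#B. \<not> b \<subseteq> I)"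

definition buffered_set :: "nat \<Rightarrow> 'a set \<times> 'a set \<times> 'a set \<Rightarrow> bool" where
  "buffered_set l C \<longleftrightarrow> (case C of (S, SL, SR) \<Rightarrow>
     finite S \<and> SL \<subseteq> S \<and> SR \<subseteq> S \<and>
     (int (card S) \<le> int l - 2 \<longrightarrow> SL = S \<and> SR = S) \<and>
     (int l - 1 \<le> int (card S) \<and> int (card S) \<le> 2 * int l - 2 \<longrightarrow>
        int (card SL) = int l - 1 \<and> int (card SR) = int l - 1 \<and> SL \<union> SR = S) \<and>
     (2 * int l - 1 \<le> int (card S) \<longrightarrow>
        int (card SL) = int l - 1 \<and> int (card SR) = int l - 1 \<and> SL \<inter> SR = {}))"

definition deficient :: "nat \<Rightarrow> 'a set \<times> 'a set \<times> 'a set \<Rightarrow> bool" where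
  "deficient l C \<longleftrightarrow> int (card (fst C)) \<le> int l - 2"

text \<open>An l-presequencing with s classes, given as a list P of length s; indices mod s.\<close>
definition presequencing ::
  "nat \<Rightarrow> 'a set \<Rightarrow> 'a set multiset \<Rightarrow> ('a set \<times> 'a set \<times> 'a set) list \<Rightarrow> bool" where
  "presequencing l X B P \<longleftrightarrow>
     (let s = length P in
       (\<forall>i<s. buffered_set l (P ! i)) \<and>
       (\<Union>i<s. fst (P ! i)) = X \<and>
       (\<forall>i<s. \<forall>j<s. i \<noteq> j \<longrightarrow> fst (P ! i) \<inter> fst (P ! j) = {}) \<and>
       (\<forall>i<s. independent X B (fst (P ! i))) \<and>
       (\<forall>i<s. independent X B (snd (snd (P ! i)) \<union> fst (snd (P ! ((i + 1) mod s))))))"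

definition nondeficient_presequencing ::
  "nat \<Rightarrow> 'a set \<Rightarrow> 'a set multiset \<Rightarrow> ('a set \<times> 'a set \<times> 'a set) list \<Rightarrow> bool" where
  "nondeficient_presequencing l X B P \<longleftrightarrow>
     presequencing l X B P \<and> (\<forall>i<length P. \<not> deficient l (P ! i))"

end

theory Submission
  imports Defs
begin

lemma indep_subset: "independent X B I \<Longrightarrow> J \<subseteq> I \<Longrightarrow> independent X B J"
  unfolding independent_def by blast

lemma card_set_mset_le_size: "card (set_mset M) \<le> size M"
  by (induction M) (auto simp: card_insert_if)

lemma choose_diff_mono:
  assumes "d \<le> D"
  shows "((m + d) choose t) + (D choose t) \<le> ((m + D) choose t) + (d choose t)"
  using assms
proof (induction D rule: dec_induct)
  case base
  then show ?case by simp
next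
  case (step D)
  show ?case
  proof (cases t)
    case 0
    then show ?thesis using step by simp
  next
    case (Suc u)
    have "(Suc D choose t) = (D choose t) + (D choose u)" using Suc by simp
    moreover have "((m + Suc D) choose t) = ((m + D) choose t) + ((m + D) choose u)" using Suc by simp
    moreover have "(D choose u) \<le> ((m + D) choose u)" by (rule binomial_right_mono) simp
    ultimately show ?thesis using step.IH by linarith
  qed
qed

lemma bad_bound:
  assumes ps: "partial_system n k t lam X B" and tk: "t < k"
    and W1: "independent X B W1" and W2: "independent X B W2"
  shows "card {x \<in> X - (W1 \<union> W2). \<not> independent X B (insert x W1) \<or> \<not> independent X B (insert x W2)}
           * ((k - 1) choose t)
         \<le> lam * card ({T. T \<subseteq> W1 \<and> card T = t} \<union> {T. T \<subseteq> W2 \<and> card T = t})"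
proof -
  define Bad where "Bad = {x \<in> X - (W1 \<union> W2). \<not> independent X B (insert x W1) \<or> \<not> independent X B (insert x W2)}"
  define BB where "BB = {b \<in> set_mset B. \<exists>x. x \<in> X - (W1 \<union> W2) \<and> x \<in> b \<and> (b \<subseteq> insert x W1 \<or> b \<subseteq> insert x W2)}"
  define TT where "TT = {T. T \<subseteq> W1 \<and> card T = t} \<union> {T. T \<subseteq> W2 \<and> card T = t}"
  define e where "e b = (SOME x. x \<in> b - (W1 \<union> W2))" for b
  have finX: "finite X" using ps unfolding partial_system_def by auto
  have W1X: "W1 \<subseteq> X" and W2X: "W2 \<subseteq> X" using W1 W2 unfolding independent_def by auto
  have finW1: "finite W1" and finW2: "finite W2" using W1X W2X finX finite_subset by auto
  have finTT: "finite TT"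
  proof -
    have "TT \<subseteq> Pow (W1 \<union> W2)" unfolding TT_def by auto
    then show ?thesis using finW1 finW2 finite_subset by blast
  qed
  have finBB: "finite BB" unfolding BB_def by auto
  have "Bad \<subseteq> e ` BB"
  proof
    fix x assume "x \<in> Bad"
    then have xX: "x \<in> X - (W1 \<union> W2)" and ni: "\<not> independent X B (insert x W1) \<or> \<not> independent X B (insert x W2)"
      unfolding Bad_def by auto
    then obtain b where bB: "b \<in># B" and bs: "b \<subseteq> insert x W1 \<or> b \<subseteq> insert x W2"
      using W1X W2X unfolding independent_def by auto
    have xb: "x \<in> b" using bs bB W1 W2 unfolding independent_def by blast
    have "b - (W1 \<union> W2) = {x}" using xb bs xX by blast
    then have "e b = x" unfolding e_def by simp
    moreover have "b \<in> BB" unfolding BB_def using bB xX xb bs by blast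
    ultimately show "x \<in> e ` BB" by blast
  qed
  then have c1: "card Bad \<le> card BB" using finBB card_image_le card_mono finite_imageI le_trans by metis
  have c2: "(k - 1) choose t \<le> card {T \<in> TT. T \<subseteq> b}" if "b \<in> BB" for b
  proof -
    obtain x where bB: "b \<in># B" and xX: "x \<in> X - (W1 \<union> W2)" and xb: "x \<in> b"
      and bs: "b \<subseteq> insert x W1 \<or> b \<subseteq> insert x W2"
      using \<open>b \<in> BB\<close> unfolding BB_def by auto
    have cb: "card b = k" and finb: "finite b" using bB ps finX finite_subset unfolding partial_system_def by auto
    have cb1: "card (b - {x}) = k - 1" using cb xb finb by simp
    have "{T. T \<subseteq> b - {x} \<and> card T = t} \<subseteq> {T \<in> TT. T \<subseteq> b}"
      using bs unfolding TT_def by auto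
    moreover have "card {T. T \<subseteq> b - {x} \<and> card T = t} = (k - 1) choose t"
      using n_subsets[of "b - {x}" t] finb cb1 by simp
    ultimately show ?thesis using finTT card_mono[of "{T \<in> TT. T \<subseteq> b}"] by (metis (no_types, lifting) mem_Collect_eq rev_finite_subset subsetI)
  qed
  have c3: "card {b \<in> BB. T \<subseteq> b} \<le> lam" if "T \<in> TT" for T
  proof -
    have TX: "T \<subseteq> X" "card T = t" using that W1X W2X unfolding TT_def by auto
    have "{b \<in> BB. T \<subseteq> b} \<subseteq> set_mset (filter_mset (\<lambda>b. T \<subseteq> b) B)" unfolding BB_def by auto
    then have "card {b \<in> BB. T \<subseteq> b} \<le> card (set_mset (filter_mset (\<lambda>b. T \<subseteq> b) B))"
      by (intro card_mono) auto
    also have "\<dots> \<le> size (filter_mset (\<lambda>b. T \<subseteq> b) B)" by (rule card_set_mset_le_size)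
    also have "\<dots> \<le> lam" using ps TX unfolding partial_system_def by auto
    finally show ?thesis .
  qed
  have "card BB * ((k - 1) choose t) = (\<Sum>b\<in>BB. (k - 1) choose t)" by simp
  also have "\<dots> \<le> (\<Sum>b\<in>BB. card {T \<in> TT. T \<subseteq> b})" by (intro sum_mono c2)
  also have "\<dots> = (\<Sum>b\<in>BB. \<Sum>T\<in>{T \<in> TT. T \<subseteq> b}. 1)" by simp
  also have "\<dots> = (\<Sum>T\<in>TT. \<Sum>b | b \<in> BB \<and> T \<subseteq> b. 1)"
    by (rule sum.swap_restrict[OF finBB finTT])
  also have "\<dots> = (\<Sum>T\<in>TT. card {b \<in> BB. T \<subseteq> b})" by simp
  also have "\<dots> \<le> (\<Sum>T\<in>TT. lam)" by (intro sum_mono c3)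
  also have "\<dots> = lam * card TT" by simp
  finally have "card BB * ((k - 1) choose t) \<le> lam * card TT" .
  then show ?thesis using c1 unfolding Bad_def[symmetric] TT_def[symmetric]
    by (meson le_trans mult_le_mono1)
qed


lemma TT_bound:
  assumes fin1: "finite W1" and fin2: "finite W2" and SW: "S \<subseteq> W1 \<inter> W2"
    and c1: "card W1 \<le> (l - 1) + card S" and c2: "card W2 \<le> (l - 1) + card S"
    and cS: "card S \<le> l - 2" and l2: "l \<ge> 2"
  shows "card ({T. T \<subseteq> W1 \<and> card T = t} \<union> {T. T \<subseteq> W2 \<and> card T = t}) + ((l - 2) choose t)
         \<le> 2 * ((2 * l - 3) choose t)"
proof -
  define F1 where "F1 = {T. T \<subseteq> W1 \<and> card T = t}"
  define F2 where "F2 = {T. T \<subseteq> W2 \<and> card T = t}"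
  have finF1: "finite F1" unfolding F1_def using fin1 by (auto intro: finite_subset[of _ "Pow W1"])
  have finF2: "finite F2" unfolding F2_def using fin2 by (auto intro: finite_subset[of _ "Pow W2"])
  have "F1 \<inter> F2 = {T. T \<subseteq> W1 \<inter> W2 \<and> card T = t}" unfolding F1_def F2_def by auto
  then have cI: "card (F1 \<inter> F2) = card (W1 \<inter> W2) choose t" using n_subsets[of "W1 \<inter> W2" t] fin1 by (simp del: Int_subset_iff)
  have cSI: "card S \<le> card (W1 \<inter> W2)" using SW fin1 by (intro card_mono) auto
  have e1: "card F1 = card W1 choose t" unfolding F1_def using n_subsets[OF fin1] by simp
  have e2: "card F2 = card W2 choose t" unfolding F2_def using n_subsets[OF fin2] by simp
  have u: "card (F1 \<union> F2) + card (F1 \<inter> F2) = card F1 + card F2"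
    using card_Un_Int finF1 finF2 by metis
  define d where "d = card S"
  have m1: "(card W1 choose t) \<le> ((l - 1 + d) choose t)" using c1 d_def by (intro binomial_right_mono) simp
  have m2: "(card W2 choose t) \<le> ((l - 1 + d) choose t)" using c2 d_def by (intro binomial_right_mono) simp
  have m3: "(d choose t) \<le> (card (W1 \<inter> W2) choose t)" using cSI d_def by (intro binomial_right_mono) simp
  have eq: "l - 1 + (l - 2) = 2 * l - 3" using l2 by simp
  have m4: "((l - 1 + d) choose t) + ((l - 2) choose t) \<le> ((2 * l - 3) choose t) + (d choose t)"
    using choose_diff_mono[of d "l - 2" "l - 1" t] cS d_def eq by simp
  have m5: "((l - 1 + d) choose t) \<le> ((2 * l - 3) choose t)"
    using cS d_def eq by (intro binomial_right_mono) simp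
  show ?thesis unfolding F1_def[symmetric] F2_def[symmetric]
    using u cI e1 e2 m1 m2 m3 m4 m5 by linarith
qed


lemma mod_pred_unique:
  fixes m s a :: nat
  assumes "m < s" "a < s" "(m + 1) mod s = (a + 1) mod s"
  shows "m = a"
proof -
  have e: "(y + 1) mod s = (if y + 1 = s then 0 else y + 1)" if "y < s" for y
    using that by auto
  show ?thesis using assms e[of m] e[of a] by (auto split: if_splits)
qed

lemma construct:
  assumes pre: "presequencing l X B P" and len: "length P = s"
    and i: "i < s" and j: "j < s" and ij: "i \<noteq> j"
    and defi: "int (card (fst (P!i))) \<le> int l - 2"
    and xY: "x \<in> fst (P!j)" and xL: "x \<notin> fst (snd (P!j))" and xR: "x \<notin> snd (snd (P!j))"
    and ind1: "\<forall>m<s. (m+1) mod s = i \<longrightarrow> independent X B (insert x (snd (snd (P!m)) \<union> fst (P!i)))"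
    and ind2: "independent X B (insert x (fst (P!i) \<union> fst (snd (P!((i+1) mod s)))))"
  defines "P' \<equiv> P[i := (insert x (fst (P!i)), insert x (fst (P!i)), insert x (fst (P!i))),
                   j := (fst (P!j) - {x}, fst (snd (P!j)), snd (snd (P!j)))]"
  shows "length P' = s \<and> presequencing l X B P' \<and>
         (\<Sum>m<s. l - 1 - card (fst (P'!m))) < (\<Sum>m<s. l - 1 - card (fst (P!m)))"
proof -
  have buf: "\<And>m. m < s \<Longrightarrow> buffered_set l (P!m)"
    and un: "(\<Union>m<s. fst (P!m)) = X"
    and dis: "\<And>m m'. m < s \<Longrightarrow> m' < s \<Longrightarrow> m \<noteq> m' \<Longrightarrow> fst (P!m) \<inter> fst (P!m') = {}"
    and indc: "\<And>m. m < s \<Longrightarrow> independent X B (fst (P!m))"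
    and indp: "\<And>m. m < s \<Longrightarrow> independent X B (snd (snd (P!m)) \<union> fst (snd (P!((m+1) mod s))))"
    using pre len unfolding presequencing_def Let_def by auto
  obtain S SL SR where PI: "P!i = (S, SL, SR)" by (cases "P!i") auto
  obtain Y LY RY where PJ: "P!j = (Y, LY, RY)" by (cases "P!j") auto
  have cS: "int (card S) \<le> int l - 2" using defi PI by simp
  have bI: "buffered_set l (S, SL, SR)" using buf[OF i] PI by simp
  have SLS: "SL = S" "SR = S" and finS: "finite S" using bI cS unfolding buffered_set_def by auto
  have bJ: "buffered_set l (Y, LY, RY)" using buf[OF j] PJ by simp
  have xY': "x \<in> Y" "x \<notin> LY" "x \<notin> RY" using xY xL xR PJ by auto
  have finY: "finite Y" and LYY: "LY \<subseteq> Y" and RYY: "RY \<subseteq> Y" using bJ unfolding buffered_set_def by auto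
  have cY: "2 * int l - 1 \<le> int (card Y)"
  proof (rule ccontr)
    assume "\<not> ?thesis"
    then show False using bJ xY' unfolding buffered_set_def by auto
  qed
  then have LRY: "int (card LY) = int l - 1" "int (card RY) = int l - 1" "LY \<inter> RY = {}"
    using bJ unfolding buffered_set_def by auto
  have l2: "l \<ge> 2" using cS by linarith
  have s2: "s \<ge> 2" using i j ij by linarith
  have xS: "x \<notin> S" using dis[OF i j ij] PI PJ xY' by auto
  define S' where "S' = insert x S"
  have P'I: "P'!i = (S', S', S')" unfolding P'_def S'_def using i j ij len PI by simp
  have P'J: "P'!j = (Y - {x}, LY, RY)" unfolding P'_def using i j ij len PJ by simp
  have P'O: "P'!m = P!m" if "m \<noteq> i" "m \<noteq> j" for m unfolding P'_def using that by simp
  have len': "length P' = s" unfolding P'_def using len by simp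
  have bufeq: "fst (snd (P'!m)) = fst (snd (P!m)) \<and> snd (snd (P'!m)) = snd (snd (P!m))" if "m \<noteq> i" for m
    using that P'J PJ P'O by (cases "m = j") auto
  have fstI: "fst (P'!m) \<subseteq> fst (P!m) - {x}" if "m < s" "m \<noteq> i" for m
  proof (cases "m = j")
    case True then show ?thesis using P'J PJ by simp
  next
    case False
    then have "x \<notin> fst (P!m)" using dis[OF that(1) j False] xY by auto
    then show ?thesis using P'O[OF that(2) False] by auto
  qed
  have SX: "S' \<subseteq> X" using ind2 PI unfolding S'_def independent_def by auto
  have cS': "card S' = card S + 1" unfolding S'_def using finS xS by simp
  have buf': "buffered_set l (P'!m)" if "m < s" for m
  proof -
    consider "m = i" | "m = j" | "m \<noteq> i" "m \<noteq> j" by blast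
    then show ?thesis
    proof cases
      case 1
      then show ?thesis using P'I cS' cS finS unfolding buffered_set_def S'_def by auto
    next
      case 2
      have finY': "finite (Y - {x})" using finY by simp
      have cY': "card (Y - {x}) = card Y - 1" using xY' finY by simp
      have sub: "LY \<union> RY \<subseteq> Y - {x}" using LYY RYY xY' by auto
      have "card (LY \<union> RY) = card LY + card RY"
        using card_Un_disjoint finite_subset[OF LYY finY] finite_subset[OF RYY finY] LRY(3) by blast
      moreover have "card LY = l - 1" "card RY = l - 1" using LRY l2 by linarith+
      ultimately have cLR: "card (LY \<union> RY) = 2 * l - 2" by simp
      have eqLR: "int (card (Y - {x})) \<le> 2 * int l - 2 \<Longrightarrow> LY \<union> RY = Y - {x}"
        using card_subset_eq[OF finY' sub] cLR cY' cY by linarith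
      show ?thesis using 2 P'J finY' sub eqLR LRY cY' cY unfolding buffered_set_def by auto
    next
      case 3
      then show ?thesis using P'O buf that by simp
    qed
  qed
  have un': "(\<Union>m<s. fst (P'!m)) = X"
  proof
    show "(\<Union>m<s. fst (P'!m)) \<subseteq> X"
    proof (intro UN_least)
      fix m assume "m \<in> {..<s}"
      then have m: "m < s" by simp
      show "fst (P'!m) \<subseteq> X"
      proof (cases "m = i")
        case True then show ?thesis using P'I SX by simp
      next
        case False then show ?thesis using fstI[OF m False] un m by blast
      qed
    qed
  next
    show "X \<subseteq> (\<Union>m<s. fst (P'!m))"
    proof
      fix y assume "y \<in> X"
      then obtain m where m: "m < s" "y \<in> fst (P!m)" using un by blast
      show "y \<in> (\<Union>m<s. fst (P'!m))"
      proof (cases "y = x")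
        case True then show ?thesis using P'I i unfolding S'_def by force
      next
        case False
        have "y \<in> fst (P'!m)"
        proof -
          consider "m = i" | "m = j" | "m \<noteq> i" "m \<noteq> j" by blast
          then show ?thesis
            by cases (use P'I P'J P'O PI PJ m False S'_def in auto)
        qed
        then show ?thesis using m by blast
      qed
    qed
  qed
  have dis': "fst (P'!m) \<inter> fst (P'!m') = {}" if "m < s" "m' < s" "m \<noteq> m'" for m m'
  proof -
    have gen: "fst (P'!a) \<inter> fst (P'!b) = {}" if ab: "a < s" "b < s" "a \<noteq> b" "b \<noteq> i" for a b
    proof (cases "a = i")
      case True
      then show ?thesis using fstI[OF ab(2) ab(4)] P'I dis[OF ab(1-3)] PI unfolding S'_def by auto
    next
      case False
      then show ?thesis using fstI[OF ab(2) ab(4)] fstI[OF ab(1) False] dis[OF ab(1-3)] by auto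
    qed
    show ?thesis
    proof (cases "m' = i")
      case True
      then have "m \<noteq> i" using that by simp
      then show ?thesis using gen[of m' m] that by blast
    next
      case False then show ?thesis using gen that by blast
    qed
  qed
  have indc': "independent X B (fst (P'!m))" if "m < s" for m
  proof (cases "m = i")
    case True then show ?thesis using P'I ind2 PI S'_def by (auto intro: indep_subset)
  next
    case False then show ?thesis using fstI[OF that False] indc[OF that] by (auto intro: indep_subset)
  qed
  have ci: "(i + 1) mod s \<noteq> i"
  proof
    assume "(i + 1) mod s = i"
    then show False using s2 i
      by (cases "i + 1 = s") auto
  qed
  have indp': "independent X B (snd (snd (P'!m)) \<union> fst (snd (P'!((m+1) mod s))))" if m: "m < s" for m
  proof -
    consider "m = i" | "m \<noteq> i" "(m+1) mod s = i" | "m \<noteq> i" "(m+1) mod s \<noteq> i" by blast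
    then show ?thesis
    proof cases
      case 1
      then show ?thesis using P'I bufeq[OF ci] ind2 PI S'_def by simp
    next
      case 2
      have "independent X B (insert x (snd (snd (P!m)) \<union> fst (P!i)))" using ind1 m 2 by blast
      then show ?thesis using 2 bufeq[of m] P'I PI S'_def by simp
    next
      case 3
      then show ?thesis using bufeq[of m] bufeq[of "(m+1) mod s"] indp[OF m] by simp
    qed
  qed
  have pre': "presequencing l X B P'"
    unfolding presequencing_def Let_def len' using buf' un' dis' indc' indp' by blast
  have le: "l - 1 - card (fst (P'!m)) \<le> l - 1 - card (fst (P!m))" if "m \<in> {..<s}" for m
  proof -
    consider "m = i" | "m = j" | "m \<noteq> i" "m \<noteq> j" by blast
    then show ?thesis
    proof cases
      case 1 then show ?thesis using P'I PI cS' by simp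
    next
      case 2
      have "card (Y - {x}) \<ge> l - 1" using cY finY xY' by simp
      then show ?thesis using 2 P'J by simp
    next
      case 3 then show ?thesis using P'O by simp
    qed
  qed
  have lt: "l - 1 - card (fst (P'!i)) < l - 1 - card (fst (P!i))"
    using P'I PI cS' cS by simp
  have "(\<Sum>m<s. l - 1 - card (fst (P'!m))) < (\<Sum>m<s. l - 1 - card (fst (P!m)))"
    by (rule sum_strict_mono_ex1) (use le lt i in auto)
  then show ?thesis using len' pre' by blast
qed


lemma buf_card:
  assumes "buffered_set l (A, L, R)"
  shows "card L \<le> l - 1" "card R \<le> l - 1" "finite A" "L \<subseteq> A" "R \<subseteq> A"
  using assms unfolding buffered_set_def
  by (auto split: if_splits; smt (verit, ccfv_SIG) of_nat_diff of_nat_le_iff)+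

lemma step:
  assumes ps: "partial_system n k t lam X B" and tk: "t < k"
    and pre: "presequencing l X B P" and len: "length P = s"
    and i: "i < s" and defi: "int (card (fst (P!i))) \<le> int l - 2"
    and hyp: "real n > real lam * (2 * real ((2 * l - 3) choose t) - real ((l - 2) choose t))
                     / real ((k - 1) choose t)
                   + (2 * real s - 1) * (real l - 1) - 1"
  shows "\<exists>P'. length P' = s \<and> presequencing l X B P' \<and>
         (\<Sum>m<s. l - 1 - card (fst (P'!m))) < (\<Sum>m<s. l - 1 - card (fst (P!m)))"
proof -
  have buf: "\<And>m. m < s \<Longrightarrow> buffered_set l (P!m)"
    and un: "(\<Union>m<s. fst (P!m)) = X"
    and dis: "\<And>m m'. m < s \<Longrightarrow> m' < s \<Longrightarrow> m \<noteq> m' \<Longrightarrow> fst (P!m) \<inter> fst (P!m') = {}"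
    and indp: "\<And>m. m < s \<Longrightarrow> independent X B (snd (snd (P!m)) \<union> fst (snd (P!((m+1) mod s))))"
    using pre len unfolding presequencing_def Let_def by auto
  have finX: "finite X" and cX: "card X = n" using ps unfolding partial_system_def by auto
  define C where "C m = fst (P!m)" for m
  define L where "L m = fst (snd (P!m))" for m
  define R where "R m = snd (snd (P!m))" for m
  have PC: "P!m = (C m, L m, R m)" for m unfolding C_def L_def R_def by simp
  have bc: "card (L m) \<le> l - 1" "card (R m) \<le> l - 1" "finite (C m)" "L m \<subseteq> C m" "R m \<subseteq> C m"
    if "m < s" for m using buf_card[of l "C m" "L m" "R m"] buf[OF that] PC[of m] by auto
  define S where "S = C i"
  have cS: "int (card S) \<le> int l - 2" using defi S_def C_def by simp
  have l2: "l \<ge> 2" using cS by linarith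
  have cS': "card S \<le> l - 2" using cS by linarith
  have LS: "L i = S" "R i = S" using buf[OF i] PC[of i] cS unfolding buffered_set_def S_def by auto
  have s0: "s > 0" using i by simp
  define a where "a = (i + s - 1) mod s"
  have a: "a < s" unfolding a_def using s0 by simp
  have ai: "(a + 1) mod s = i"
  proof -
    have "(a + 1) mod s = (i + s - 1 + 1) mod s" unfolding a_def by (simp add: mod_Suc_eq)
    also have "\<dots> = (i + s) mod s" using s0 by simp
    also have "\<dots> = i" using i by simp
    finally show ?thesis .
  qed
  define c where "c = (i + 1) mod s"
  have c: "c < s" unfolding c_def using s0 by simp
  define W1 where "W1 = R a \<union> S"
  define W2 where "W2 = S \<union> L c"
  have indW1: "independent X B W1" using indp[OF a] ai LS unfolding W1_def R_def L_def by simp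
  have indW2: "independent X B W2" using indp[OF i] LS unfolding W2_def R_def L_def c_def by simp
  have W1X: "W1 \<subseteq> X" and W2X: "W2 \<subseteq> X" using indW1 indW2 unfolding independent_def by auto
  have finW1: "finite W1" and finW2: "finite W2" using W1X W2X finX finite_subset by auto
  have cW1: "card W1 \<le> (l - 1) + card S"
    using card_Un_le[of "R a" S] bc(2)[OF a] unfolding W1_def by linarith
  have cW2: "card W2 \<le> (l - 1) + card S"
    using card_Un_le[of S "L c"] bc(1)[OF c] unfolding W2_def by linarith
  have SW: "S \<subseteq> W1 \<inter> W2" unfolding W1_def W2_def by auto
  define TT where "TT = {T. T \<subseteq> W1 \<and> card T = t} \<union> {T. T \<subseteq> W2 \<and> card T = t}"
  have TTb: "card TT + ((l - 2) choose t) \<le> 2 * ((2 * l - 3) choose t)"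
    unfolding TT_def by (rule TT_bound[OF finW1 finW2 SW cW1 cW2 cS' l2])
  define Bad where "Bad = {x \<in> X - (W1 \<union> W2). \<not> independent X B (insert x W1) \<or> \<not> independent X B (insert x W2)}"
  have Badb: "card Bad * ((k - 1) choose t) \<le> lam * card TT"
    unfolding Bad_def TT_def by (rule bad_bound[OF ps tk indW1 indW2])
  define mid where "mid m = C m - L m - R m" for m
  define J where "J = {..<s} - {i}"
  define M where "M = (\<Union>m\<in>J. mid m)"
  have finJ: "finite J" unfolding J_def by simp
  have cM: "card M = (\<Sum>m\<in>J. card (mid m))"
    unfolding M_def
  proof (rule card_UN_disjoint[OF finJ])
    show "\<forall>m\<in>J. finite (mid m)" unfolding J_def mid_def using bc by auto
    show "\<forall>m\<in>J. \<forall>m'\<in>J. m \<noteq> m' \<longrightarrow> mid m \<inter> mid m' = {}"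
      unfolding J_def mid_def C_def using dis by blast
  qed
  have cmid: "int (card (mid m)) \<ge> int (card (C m)) - 2 * (int l - 1)" if "m < s" for m
  proof -
    have "C m \<subseteq> mid m \<union> L m \<union> R m" unfolding mid_def by auto
    then have "card (C m) \<le> card (mid m \<union> L m \<union> R m)" using bc[OF that] finite_subset
      by (intro card_mono) (auto simp: mid_def)
    also have "\<dots> \<le> card (mid m) + card (L m) + card (R m)"
      by (metis card_Un_le add_le_mono1 le_trans)
    finally have "card (C m) \<le> card (mid m) + card (L m) + card (R m)" .
    then have "int (card (C m)) \<le> int (card (mid m)) + int (card (L m)) + int (card (R m))"
      by (simp only: of_nat_add[symmetric] of_nat_le_iff)
    moreover have "int (card (L m)) \<le> int l - 1" "int (card (R m)) \<le> int l - 1" using bc[OF that] l2 by linarith+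
    ultimately show ?thesis by (smt (verit))
  qed
  have cn: "n = (\<Sum>m<s. card (C m))"
  proof -
    have "card (\<Union>m<s. C m) = (\<Sum>m<s. card (C m))"
      by (rule card_UN_disjoint) (use bc dis C_def in auto)
    then show ?thesis using un cX C_def by simp
  qed
  have cn2: "(\<Sum>m<s. card (C m)) = card S + (\<Sum>m\<in>J. card (C m))"
    unfolding J_def S_def using i by (simp add: sum.remove)
  have cJ: "card J = s - 1" unfolding J_def using i by simp
  have "int (card M) = (\<Sum>m\<in>J. int (card (mid m)))" using cM by simp
  also have "\<dots> \<ge> (\<Sum>m\<in>J. int (card (C m)) - 2 * (int l - 1))"
    by (intro sum_mono) (use cmid J_def in auto)
  finally have cM2: "int (card M) \<ge> (\<Sum>m\<in>J. int (card (C m))) - int (card J) * (2 * (int l - 1))"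
    by (simp add: sum_subtractf)
  have cM3: "int (card M) \<ge> int n - int (card S) - (int s - 1) * (2 * (int l - 1))"
  proof -
    have "int n = int (card S) + (\<Sum>m\<in>J. int (card (C m)))" using cn cn2 by simp
    moreover have "int (card J) = int s - 1" using cJ s0 by simp
    ultimately show ?thesis using cM2 by simp
  qed
  have rM: "real (card M) \<ge> real n - (real l - 2) - (real s - 1) * (2 * (real l - 1))"
  proof -
    have "real_of_int (int n - int (card S) - (int s - 1) * (2 * (int l - 1))) \<le> real_of_int (int (card M))"
      using cM3 by (simp only: of_int_le_iff)
    then have "real n - real (card S) - (real s - 1) * (2 * (real l - 1)) \<le> real (card M)"
      by simp
    moreover have "real (card S) \<le> real l - 2" using cS' l2 by linarith
    ultimately show ?thesis by linarith
  qed
  define Ck where "Ck = (k - 1) choose t"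
  have Ck: "Ck > 0" unfolding Ck_def using tk by simp
  define Q where "Q = 2 * real ((2 * l - 3) choose t) - real ((l - 2) choose t)"
  have TTQ: "real (card TT) \<le> Q" unfolding Q_def using TTb by linarith
  have "real (card Bad * Ck) \<le> real (lam * card TT)"
    using Badb unfolding Ck_def by (simp only: of_nat_le_iff)
  then have "real (card Bad) * real Ck \<le> real lam * real (card TT)" by simp
  also have "\<dots> \<le> real lam * Q" using TTQ by (simp add: mult_left_mono)
  finally have bB: "real (card Bad) \<le> real lam * Q / real Ck" using Ck by (simp add: pos_le_divide_eq)
  define z where "z = real lam * Q / real Ck"
  define y where "y = (real s - 1) * (2 * (real l - 1))"
  have e: "(2 * real s - 1) * (real l - 1) - 1 = y + (real l - 2)" unfolding y_def by (simp add: algebra_simps)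
  have hyp': "real n > z + ((2 * real s - 1) * (real l - 1) - 1)"
    using hyp unfolding z_def Q_def Ck_def by simp
  have lt: "real (card Bad) < real (card M)"
    using hyp' e bB rM unfolding z_def[symmetric] y_def[symmetric] by linarith
  have MX: "M \<subseteq> X - (W1 \<union> W2)"
  proof
    fix x assume "x \<in> M"
    then obtain j where j: "j < s" "j \<noteq> i" "x \<in> C j" "x \<notin> L j" "x \<notin> R j"
      unfolding M_def J_def mid_def by auto
    have "x \<in> X" using un j C_def by blast
    moreover have "x \<notin> S" using dis[OF i j(1)] j S_def C_def by auto
    moreover have "x \<notin> R a"
    proof
      assume "x \<in> R a"
      then have "x \<in> C a" using bc[OF a] by auto
      then have "a = j" using dis[OF a j(1)] j C_def by auto
      then show False using j \<open>x \<in> R a\<close> by simp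
    qed
    moreover have "x \<notin> L c"
    proof
      assume "x \<in> L c"
      then have "x \<in> C c" using bc[OF c] by auto
      then have "c = j" using dis[OF c j(1)] j C_def by auto
      then show False using j \<open>x \<in> L c\<close> by simp
    qed
    ultimately show "x \<in> X - (W1 \<union> W2)" unfolding W1_def W2_def by auto
  qed
  have "\<not> M \<subseteq> Bad"
  proof
    assume "M \<subseteq> Bad"
    moreover have "finite Bad" unfolding Bad_def using finX by simp
    ultimately have "card M \<le> card Bad" by (rule card_mono[rotated])
    then show False using lt by simp
  qed
  then obtain x where xM: "x \<in> M" and xB: "x \<notin> Bad" by blast
  then obtain j where j: "j < s" "j \<noteq> i" "x \<in> C j" "x \<notin> L j" "x \<notin> R j"
    unfolding M_def J_def mid_def by auto
  have xI: "independent X B (insert x W1)" "independent X B (insert x W2)"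
    using xM xB MX unfolding Bad_def by auto
  have ind1: "\<forall>m<s. (m+1) mod s = i \<longrightarrow> independent X B (insert x (snd (snd (P!m)) \<union> fst (P!i)))"
  proof (intro allI impI)
    fix m assume m: "m < s" "(m + 1) mod s = i"
    then have "m = a" using mod_pred_unique[OF m(1) a] ai by simp
    then show "independent X B (insert x (snd (snd (P!m)) \<union> fst (P!i)))"
      using xI(1) unfolding W1_def R_def S_def C_def by simp
  qed
  have ind2: "independent X B (insert x (fst (P!i) \<union> fst (snd (P!((i+1) mod s)))))"
    using xI(2) unfolding W2_def S_def C_def L_def c_def by simp
  show ?thesis
    using construct[OF pre len i j(1) j(2)[symmetric] defi _ _ _ ind1 ind2] j
    unfolding C_def L_def R_def by blast
qed

theorem lemma6:
  fixes n k t lam l s :: nat and X :: "'a set" and B :: "'a set multiset"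
  assumes "n \<ge> k" and "k > t" and "t \<ge> 2" and "lam > 0"
    and "l > 0" and "s > 0"
    and "partial_system n k t lam X B"
    and "\<exists>P. length P = s \<and> presequencing l X B P"
    and "real n > real lam * (2 * real ((2 * l - 3) choose t) - real ((l - 2) choose t))
                     / real ((k - 1) choose t)
                   + (2 * real s - 1) * (real l - 1) - 1"
  shows "\<exists>P. length P = s \<and> nondeficient_presequencing l X B P"
proof -
  have main: "\<forall>P. length P = s \<and> presequencing l X B P \<and> (\<Sum>m<s. l - 1 - card (fst (P!m))) = d
      \<longrightarrow> (\<exists>P. length P = s \<and> nondeficient_presequencing l X B P)" for d
  proof (induction d rule: less_induct)
    case (less d)
    show ?case
    proof (intro allI impI)
      fix P assume P: "length P = s \<and> presequencing l X B P \<and> (\<Sum>m<s. l - 1 - card (fst (P!m))) = d"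
      show "\<exists>P. length P = s \<and> nondeficient_presequencing l X B P"
      proof (cases "\<forall>i<length P. \<not> deficient l (P ! i)")
        case True
        then show ?thesis using P unfolding nondeficient_presequencing_def by blast
      next
        case False
        then obtain i where i: "i < s" "int (card (fst (P!i))) \<le> int l - 2"
          using P unfolding deficient_def by auto
        obtain P' where "length P' = s" "presequencing l X B P'"
          "(\<Sum>m<s. l - 1 - card (fst (P'!m))) < (\<Sum>m<s. l - 1 - card (fst (P!m)))"
          using step[OF assms(7) assms(2) _ _ i(1) i(2) assms(9)] P by blast
        then show ?thesis using less P by blast
      qed
    qed
  qed
  obtain P where "length P = s" "presequencing l X B P" using assms(8) by blast
  then show ?thesis using main by blast
qed

end
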